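(* Let $G$ be an $(n,d,\beta)$ expander with girth $g$, endowed with its shortest path metric $c$, and let $r$ be a root vertex. Let $P=\{p_v: v\in V\}$ be a collection of paths in $G$, $p_v$ from $v$ to $r$, and let $F$ be the set of first edges $(v,v_1)$ of the paths $p_v$. Let $q=(u_1,\ldots,u_t)$ be a walk in $G$ with $t=g/3$ which is good, i.e. at most $t/8$ of its edges $(u_i,u_{i+1})$ lie in $F$ and it contains at least $t/2$ distinct vertices. Let $X$ be the set of distinct vertices of $q$. Then $c(P[X]) = \Omega(|X|\, g)$.
   Context: An $(n,d,\beta)$ expander is a $d$-regular graph on $n$ vertices whose adjacency matrix has second largest eigenvalue $\beta<1$. The girth is the length of a shortest cycle. $c(P[X]) := c(\bigcup_{v\in X}E(p_v))$, the total cost of the union of the edges of the paths $p_v$, $v\in X$; in the shortest path metric each graph edge has cost $1$. The $\Omega$ hides an absolute constant. *)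

theory Defs
  imports Complex_Main "Jordan_Normal_Form.Char_Poly"
begin

definition simple_graph :: "nat \<Rightarrow> (nat \<Rightarrow> nat \<Rightarrow> bool) \<Rightarrow> bool" where
  "simple_graph n E \<longleftrightarrow> (\<forall>u v. E u v \<longrightarrow> u < n \<and> v < n \<and> u \<noteq> v \<and> E v u)"

definition regular :: "nat \<Rightarrow> (nat \<Rightarrow> nat \<Rightarrow> bool) \<Rightarrow> nat \<Rightarrow> bool" where
  "regular n E d \<longleftrightarrow> (\<forall>v<n. card {w. w < n \<and> E v w} = d)"

text \<open>Normalised adjacency matrix (entries 1/d), so that the top eigenvalue is 1.\<close>

definition norm_adj_matrix :: "nat \<Rightarrow> (nat \<Rightarrow> nat \<Rightarrow> bool) \<Rightarrow> nat \<Rightarrow> real mat" where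
  "norm_adj_matrix n E d = mat n n (\<lambda>(i, j). if E i j then 1 / real d else 0)"

text \<open>beta is the second largest eigenvalue of A, eigenvalues counted with (algebraic)
  multiplicity, i.e. the second entry of the non-increasingly sorted list of eigenvalues:
  at most one eigenvalue (with multiplicity) is strictly larger than beta and
  at least two are greater or equal to beta.\<close>

definition eig_mult :: "real mat \<Rightarrow> real \<Rightarrow> nat" where
  "eig_mult A x = order x (char_poly A)"

definition second_largest_eigenvalue :: "real mat \<Rightarrow> real \<Rightarrow> bool" where
  "second_largest_eigenvalue A \<beta> \<longleftrightarrow>
     (\<Sum>x\<in>{x. poly (char_poly A) x = 0 \<and> x > \<beta>}. eig_mult A x) \<le> 1 \<and>
     (\<Sum>x\<in>{x. poly (char_poly A) x = 0 \<and> x \<ge> \<beta>}. eig_mult A x) \<ge> 2"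

definition expander :: "nat \<Rightarrow> (nat \<Rightarrow> nat \<Rightarrow> bool) \<Rightarrow> nat \<Rightarrow> real \<Rightarrow> bool" where
  "expander n E d \<beta> \<longleftrightarrow> simple_graph n E \<and> regular n E d \<and>
     second_largest_eigenvalue (norm_adj_matrix n E d) \<beta> \<and> \<beta> < 1"

definition is_walk :: "nat \<Rightarrow> (nat \<Rightarrow> nat \<Rightarrow> bool) \<Rightarrow> nat list \<Rightarrow> bool" where
  "is_walk n E q \<longleftrightarrow> q \<noteq> [] \<and> set q \<subseteq> {0..<n} \<and>
     (\<forall>i. Suc i < length q \<longrightarrow> E (q ! i) (q ! Suc i))"

definition is_path_from_to :: "nat \<Rightarrow> (nat \<Rightarrow> nat \<Rightarrow> bool) \<Rightarrow> nat list \<Rightarrow> nat \<Rightarrow> nat \<Rightarrow> bool" where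
  "is_path_from_to n E p u v \<longleftrightarrow> is_walk n E p \<and> distinct p \<and> hd p = u \<and> last p = v"

definition is_cycle :: "nat \<Rightarrow> (nat \<Rightarrow> nat \<Rightarrow> bool) \<Rightarrow> nat list \<Rightarrow> bool" where
  "is_cycle n E c \<longleftrightarrow> length c \<ge> 3 \<and> is_walk n E c \<and> distinct c \<and> E (last c) (hd c)"

definition girth :: "nat \<Rightarrow> (nat \<Rightarrow> nat \<Rightarrow> bool) \<Rightarrow> nat \<Rightarrow> bool" where
  "girth n E g \<longleftrightarrow> (\<exists>c. is_cycle n E c \<and> length c = g) \<and>
     (\<forall>c. is_cycle n E c \<longrightarrow> g \<le> length c)"

definition edges_of :: "nat list \<Rightarrow> nat set set" where
  "edges_of p = {{p ! i, p ! Suc i} | i. Suc i < length p}"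

definition first_edges :: "nat \<Rightarrow> (nat \<Rightarrow> nat list) \<Rightarrow> nat set set" where
  "first_edges n p = {{v, p v ! 1} | v. v < n \<and> length (p v) \<ge> 2}"

text \<open>c(P[X]): number of distinct edges in the union of the paths p v, v in X
  (shortest path metric: every edge has cost 1).\<close>

definition union_cost :: "(nat \<Rightarrow> nat list) \<Rightarrow> nat set \<Rightarrow> nat" where
  "union_cost p X = card (\<Union>v\<in>X. edges_of (p v))"

definition good_walk :: "nat \<Rightarrow> (nat \<Rightarrow> nat list) \<Rightarrow> nat list \<Rightarrow> bool" where
  "good_walk n p q \<longleftrightarrow>
     real (card {i. Suc i < length q \<and> {q ! i, q ! Suc i} \<in> first_edges n p}) \<le> real (length q) / 8 \<and>
     real (card (set q)) \<ge> real (length q) / 2"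

end

theory Submission
  imports Defs
begin


lemma two_paths:
  assumes sym: "\<And>x y. E x y \<Longrightarrow> E y x"
    and gir: "\<And>c. 3 \<le> length c \<Longrightarrow> distinct c \<Longrightarrow> successively E c \<Longrightarrow> E (last c) (hd c) \<Longrightarrow> g \<le> length c"
  shows "distinct P1 \<Longrightarrow> distinct P2 \<Longrightarrow> successively E P1 \<Longrightarrow> successively E P2 \<Longrightarrow>
    P1 \<noteq> [] \<Longrightarrow> P2 \<noteq> [] \<Longrightarrow> hd P1 = hd P2 \<Longrightarrow> last P1 = last P2 \<Longrightarrow> P1 \<noteq> P2 \<Longrightarrow>
    g + 2 \<le> length P1 + length P2"
proof (induction P1 arbitrary: P2)
  case Nil then show ?case by simp
next
  case (Cons a xs)
  obtain ys where P2: "P2 = a # ys" using Cons.prems by (cases P2) auto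
  have xs: "xs \<noteq> []"
  proof
    assume "xs = []"
    then have "last P2 = a" using Cons.prems by simp
    then have "ys = []" using Cons.prems P2 by (metis distinct.simps(2) last_ConsR last_in_set)
    then show False using Cons.prems P2 \<open>xs = []\<close> by simp
  qed
  have ys: "ys \<noteq> []"
  proof
    assume "ys = []"
    then have "last (a#xs) = a" using Cons.prems P2 by simp
    then have "xs = []" using Cons.prems by (metis distinct.simps(2) last_ConsR last_in_set)
    then show False using xs by simp
  qed
  show ?case
  proof (cases "hd xs = hd ys")
    case True
    have "g + 2 \<le> length xs + length ys"
      apply (rule Cons.IH)
      using Cons.prems P2 xs ys True by (auto simp: successively_Cons)
    then show ?thesis using P2 by simp
  next
    case False
    have ex: "\<exists>k. k < length xs \<and> xs ! k \<in> set ys"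
      using Cons.prems P2 xs ys by (intro exI[of _ "length xs - 1"]) (auto simp: last_conv_nth)
    define k where "k = (LEAST k. k < length xs \<and> xs ! k \<in> set ys)"
    have k: "k < length xs" "xs ! k \<in> set ys" using LeastI_ex[OF ex] unfolding k_def by auto
    have kmin: "\<And>l. l < k \<Longrightarrow> xs ! l \<notin> set ys"
      using not_less_Least k(1) unfolding k_def by (metis less_trans)
    obtain j where j: "j < length ys" "ys ! j = xs ! k" using k(2) by (metis in_set_conv_nth)
    define c where "c = a # take (Suc k) xs @ rev (take j ys)"
    have lenc: "length c = Suc (Suc k) + j" using k j by (simp add: c_def)
    have "3 \<le> length c"
    proof (rule ccontr)
      assume "\<not> 3 \<le> length c"
      then have "k = 0" "j = 0" using lenc by auto
      then show False using False j xs ys by (simp add: hd_conv_nth)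
    qed
    moreover have "distinct c"
    proof -
      have d1: "distinct xs" "distinct ys" "a \<notin> set xs" "a \<notin> set ys" using Cons.prems P2 by auto
      have "set (take (Suc k) xs) \<inter> set (take j ys) = {}"
      proof (rule ccontr)
        assume "\<not> ?thesis"
        then obtain x where x: "x \<in> set (take (Suc k) xs)" "x \<in> set (take j ys)" by blast
        then obtain l where l1: "l < length (take (Suc k) xs)" "take (Suc k) xs ! l = x"
          by (metis in_set_conv_nth)
        obtain l' where l2: "l' < length (take j ys)" "take j ys ! l' = x"
          using x by (metis in_set_conv_nth)
        have l: "l < Suc k" "l' < j" "xs ! l = ys ! l'" using l1 l2 by auto
        show False
        proof (cases "l < k")
          case True then show False using kmin l j by (metis in_set_conv_nth less_trans)
        next
          case False
          then have "l = k" using l by simp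
          then have "ys ! l' = ys ! j" using l j by simp
          then show False using d1(2) l j nth_eq_iff_index_eq[of ys l' j] by simp
        qed
      qed
      then show ?thesis unfolding c_def using d1 by (auto dest: in_set_takeD)
    qed
    moreover have "successively E c"
    proof -
      have s1: "successively E xs" "successively E ys" "E a (hd xs)" "E a (hd ys)"
        using Cons.prems P2 xs ys by (auto simp: successively_Cons)
      have st: "successively E (take m zs)" if "successively E zs" for m zs
        using that by (metis append_take_drop_id successively_append_iff)
      have "successively E (a # take (Suc k) xs)"
        using s1 st[OF s1(1), of "Suc k"] xs by (cases xs) (auto simp: successively_Cons)
      moreover have "successively E (rev (take j ys))"
        using st[OF s1(2), of j] by (simp add: successively_mono sym)
      moreover have "E (xs ! k) (ys ! (j - 1))" if "j > 0"
        using successively_nth[OF s1(2), of "j-1"] that j sym by simp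
      moreover have "last (a # take (Suc k) xs) = xs ! k" using k by (simp add: take_Suc_conv_app_nth)
      moreover have "hd (rev (take j ys)) = ys ! (j - 1)" if "j > 0"
        using that j by (cases j) (auto simp: hd_rev take_Suc_conv_app_nth)
      ultimately show ?thesis unfolding c_def
        using successively_append_iff[of E "a # take (Suc k) xs" "rev (take j ys)"] by auto
    qed
    moreover have "E (last c) (hd c)"
    proof (cases j)
      case 0
      then have "last c = xs ! k" using k by (simp add: c_def take_Suc_conv_app_nth)
      then show ?thesis using 0 j ys Cons.prems P2 sym by (auto simp: c_def successively_Cons hd_conv_nth)
    next
      case (Suc j')
      then have "last c = ys ! 0" using j ys by (simp add: c_def last_rev hd_take hd_conv_nth)
      then show ?thesis using ys Cons.prems P2 sym by (auto simp: c_def successively_Cons hd_conv_nth)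
    qed
    ultimately have "g \<le> length c" by (rule gir)
    then show ?thesis using lenc k j P2 by simp
  qed
qed



lemma walk_to_path:
  "successively R q \<Longrightarrow> q \<noteq> [] \<Longrightarrow> \<exists>Q. hd Q = hd q \<and> last Q = last q \<and> distinct Q \<and>
     set Q \<subseteq> set q \<and> length Q \<le> length q \<and> successively R Q \<and> Q \<noteq> []"
proof (induction "length q" arbitrary: q rule: less_induct)
  case less
  show ?case
  proof (cases "distinct q")
    case True then show ?thesis using less.prems by blast
  next
    case False
    then obtain xs ys zs x where q: "q = xs @ [x] @ ys @ [x] @ zs" using not_distinct_decomp by blast
    define q' where "q' = xs @ x # zs"
    have s: "successively R q'"
    proof -
      have "successively R xs" "successively R (x # ys @ x # zs)" "xs \<noteq> [] \<longrightarrow> R (last xs) x"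
        using less.prems(1) unfolding q by (auto simp: successively_append_iff)
      moreover have "successively R (x # zs)"
        using \<open>successively R (x # ys @ x # zs)\<close>
          successively_append_iff[of R "x # ys" "x # zs"] by simp
      ultimately show ?thesis unfolding q'_def by (auto simp: successively_append_iff)
    qed
    have "length q' < length q" unfolding q q'_def by simp
    moreover have "q' \<noteq> []" unfolding q'_def by simp
    ultimately obtain Q where Q: "hd Q = hd q'" "last Q = last q'" "distinct Q"
      "set Q \<subseteq> set q'" "length Q \<le> length q'" "successively R Q" "Q \<noteq> []"
      using less.hyps s by blast
    have "hd q' = hd q" "last q' = last q" "set q' \<subseteq> set q"
      unfolding q q'_def by (cases xs; auto)+
    then show ?thesis using Q \<open>length q' < length q\<close> by (intro exI[of _ Q]) auto
  qed
qed

lemma successively_take: "successively R zs \<Longrightarrow> successively R (take m zs)"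
  by (metis append_take_drop_id successively_append_iff)

lemma successively_drop: "successively R zs \<Longrightarrow> successively R (drop m zs)"
  by (metis append_take_drop_id successively_append_iff)

lemma segment:
  assumes "successively R q" "\<And>x y. R x y \<Longrightarrow> R y x" "a < length q" "b < length q"
  shows "\<exists>S. S \<noteq> [] \<and> hd S = q ! a \<and> last S = q ! b \<and> set S \<subseteq> set q \<and> length S \<le> length q \<and> successively R S"
proof (cases "a \<le> b")
  case True
  define S where "S = drop a (take (Suc b) q)"
  have "S \<noteq> []" "hd S = q ! a" "last S = q ! b" "set S \<subseteq> set q" "length S \<le> length q" "successively R S"
    using assms True unfolding S_def
    by (auto simp: hd_drop_conv_nth last_conv_nth successively_take successively_drop
        dest: in_set_dropD in_set_takeD)
  then show ?thesis by blast
next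
  case False
  define S where "S = rev (drop b (take (Suc a) q))"
  have ss: "successively R (drop b (take (Suc a) q))"
    using assms by (simp add: successively_take successively_drop)
  have sr: "successively (\<lambda>x y. R y x) (drop b (take (Suc a) q))"
    by (rule successively_mono[OF ss]) (rule assms(2))
  have "S \<noteq> []" "hd S = q ! a" "last S = q ! b" "set S \<subseteq> set q" "length S \<le> length q" "successively R S"
    using assms False sr unfolding S_def
    by (auto simp: hd_drop_conv_nth last_conv_nth successively_take successively_drop hd_rev last_rev
        dest: in_set_dropD in_set_takeD)
  then show ?thesis by blast
qed


lemma lemma7_core:
  fixes n :: nat and E :: "nat \<Rightarrow> nat \<Rightarrow> bool" and g r :: nat and p :: "nat \<Rightarrow> nat list" and q :: "nat list"
  assumes sg: "simple_graph n E" and gg: "girth n E g" and g0: "100 \<le> g" and r: "r < n"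
    and paths: "\<forall>v<n. is_path_from_to n E (p v) v r" and wq: "is_walk n E q"
    and lq: "length q = g div 3" and good: "good_walk n p q"
  shows "1/16 * real (card (set q)) * real g \<le> real (union_cost p (set q))"
proof -
  define t where "t = length q"
  have sym: "\<And>x y. E x y \<Longrightarrow> E y x" and irr: "\<And>x y. E x y \<Longrightarrow> x \<noteq> y"
    and bnd: "\<And>x y. E x y \<Longrightarrow> x < n \<and> y < n"
    using sg unfolding simple_graph_def by blast+
  have gir: "g \<le> length c" if c: "3 \<le> length c" "distinct c" "successively E c" "E (last c) (hd c)" for c
  proof -
    have "set c \<subseteq> {0..<n}"
    proof
      fix x assume "x \<in> set c"
      then obtain k where k: "k < length c" "c ! k = x" by (metis in_set_conv_nth)
      show "x \<in> {0..<n}"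
      proof (cases "Suc k < length c")
        case True
        then show ?thesis using successively_nth[OF c(3) True] bnd k by auto
      next
        case False
        then have "Suc (k - 1) < length c" "Suc (k-1) = k" using k c(1) by auto
        then show ?thesis using successively_nth[OF c(3), of "k-1"] bnd k by auto
      qed
    qed
    then have "is_cycle n E c" using c unfolding is_cycle_def is_walk_def
      by (auto simp: successively_conv_nth)
    then show ?thesis using gg unfolding girth_def by blast
  qed
  have pv: "distinct (p v) \<and> successively E (p v) \<and> p v \<noteq> [] \<and> hd (p v) = v \<and> last (p v) = r"
    if "v < n" for v
    using paths that unfolding is_path_from_to_def is_walk_def by (auto simp: successively_conv_nth)
  have sq: "successively E q" "q \<noteq> []" "set q \<subseteq> {0..<n}"
    using wq unfolding is_walk_def by (auto simp: successively_conv_nth)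
  define X where "X = set q"
  have Xn: "v < n" if "v \<in> X" for v using that sq unfolding X_def by auto
  define R where "R = (\<lambda>x y. {x,y} \<in> edges_of q)"
  have RE: "E x y" if Rxy: "R x y" for x y
  proof -
    obtain i where i: "Suc i < length q" "{x,y} = {q ! i, q ! Suc i}"
      using Rxy unfolding R_def edges_of_def by blast
    have "E (q ! i) (q ! Suc i)" using successively_nth[OF sq(1) i(1)] .
    then show ?thesis using i(2) sym by (auto simp: doubleton_eq_iff)
  qed
  have Rsym: "R y x" if "R x y" for x y using that unfolding R_def by (simp add: insert_commute)
  have sR: "successively R q" unfolding R_def edges_of_def successively_conv_nth by blast
  have sE: "successively E Q" if "successively R Q" for Q
    using successively_mono[OF that] RE by blast
  have conn: "\<exists>Q. Q \<noteq> [] \<and> hd Q = u \<and> last Q = w \<and> distinct Q \<and> set Q \<subseteq> X \<and> length Q \<le> t \<and> successively R Q"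
    if uw: "u \<in> X" "w \<in> X" for u w
  proof -
    obtain a b where ab: "a < length q" "q ! a = u" "b < length q" "q ! b = w"
      using uw unfolding X_def by (metis in_set_conv_nth)
    obtain S where S: "S \<noteq> []" "hd S = u" "last S = w" "set S \<subseteq> set q" "length S \<le> length q" "successively R S"
      using segment[OF sR Rsym ab(1) ab(3)] ab by blast
    obtain Q where Q: "hd Q = hd S" "last Q = last S" "distinct Q"
     "set Q \<subseteq> set S" "length Q \<le> length S" "successively R Q" "Q \<noteq> []"
      using walk_to_path[OF S(6) S(1)] by blast
    show ?thesis using Q S unfolding X_def t_def by (intro exI[of _ Q]) auto
  qed
  have t3: "3 * t \<le> g" "g \<le> 3 * t + 2" "33 \<le> t" using lq g0 unfolding t_def by auto
  define L where "L = {v \<in> X. 2 \<le> length (p v) \<and> {v, p v ! 1} \<notin> edges_of q}"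
  have hdnth: "p v ! 0 = v" if "v < n" for v using pv[OF that] by (metis hd_conv_nth)
  have claimA: "p v ! i \<notin> X" if v: "v \<in> L" and i: "1 \<le> i" "i \<le> t" "i < length (p v)" for v i
  proof
    assume w: "p v ! i \<in> X"
    have vX: "v \<in> X" "v < n" using v Xn unfolding L_def by auto
    obtain Q where Q: "Q \<noteq> []" "hd Q = v" "last Q = p v ! i" "distinct Q" "set Q \<subseteq> X" "length Q \<le> t"
      "successively R Q" using conn[OF vX(1) w] by blast
    define P1 where "P1 = take (Suc i) (p v)"
    have P1: "distinct P1" "successively E P1" "P1 \<noteq> []" "hd P1 = v" "last P1 = p v ! i"
      "length P1 = Suc i" "P1 ! 1 = p v ! 1"
      using pv[OF vX(2)] i unfolding P1_def
      by (auto simp: successively_take hd_take last_conv_nth)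
    have "P1 \<noteq> Q"
    proof
      assume eq: "P1 = Q"
      then have "Suc 0 < length Q" using P1 i by simp
      then have "R (Q ! 0) (Q ! 1)" using successively_nth[OF Q(7), of 0] by simp
      moreover have "Q ! 0 = v" using Q by (metis hd_conv_nth)
      ultimately show False using v eq P1 unfolding L_def R_def by auto
    qed
    then have "g + 2 \<le> length P1 + length Q"
      using two_paths[of E g, OF sym gir P1(1) Q(4) P1(2) sE[OF Q(7)] P1(3) Q(1)] P1 Q by auto
    then show False using P1 Q t3 i by simp
  qed
  have claimB: "p u ! i \<noteq> p v ! j"
    if u: "u \<in> L" and v: "v \<in> L" and uv: "u \<noteq> v" and i: "1 \<le> i" "i \<le> t" "i < length (p u)"
      and j: "1 \<le> j" "j \<le> t" "j < length (p v)" for u v i j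
  proof
    assume eqw: "p u ! i = p v ! j"
    have uX: "u \<in> X" "u < n" "v \<in> X" "v < n" using u v Xn unfolding L_def by auto
    obtain Q where Q: "Q \<noteq> []" "hd Q = u" "last Q = v" "distinct Q" "set Q \<subseteq> X" "length Q \<le> t"
      "successively R Q" using conn[OF uX(1) uX(3)] by blast
    define P1 where "P1 = take (Suc i) (p u)"
    have P1: "distinct P1" "successively E P1" "P1 \<noteq> []" "hd P1 = u" "last P1 = p u ! i"
      "length P1 = Suc i" "P1 ! 1 = p u ! 1"
      using pv[OF uX(2)] i unfolding P1_def
      by (auto simp: successively_take hd_take last_conv_nth)
    define T where "T = drop 1 (take (Suc j) (p v))"
    have T: "distinct T" "successively E T" "T \<noteq> []" "hd T = p v ! 1" "last T = p v ! j" "length T = j"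
      using pv[OF uX(4)] j unfolding T_def
      by (auto simp: successively_take successively_drop hd_drop_conv_nth last_conv_nth)
    have TX: "x \<notin> X" if xT: "x \<in> set T" for x
    proof -
      obtain m where m: "m < length T" "T ! m = x" using xT by (metis in_set_conv_nth)
      have "T ! m = p v ! Suc m" using m j unfolding T_def by simp
      then show ?thesis using claimA[OF v, of "Suc m"] m T j by simp
    qed
    define P2 where "P2 = Q @ T"
    have Qlen: "2 \<le> length Q"
    proof (rule ccontr)
      assume n2: "\<not> 2 \<le> length Q"
      have "length Q > 0" using Q(1) by simp
      then have "length Q = 1" using n2 by linarith
      then have "hd Q = last Q" by (cases Q) auto
      then show False using Q uv by simp
    qed
    have Ev: "E v (p v ! 1)"
      using successively_nth[of E "p v" 0] pv[OF uX(4)] hdnth[OF uX(4)] j by simp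
    have P2: "distinct P2" "successively E P2" "P2 \<noteq> []" "hd P2 = u" "last P2 = p v ! j"
      "length P2 = length Q + j" "P2 ! 1 = Q ! 1"
      unfolding P2_def using Q T TX Qlen sE[OF Q(7)] Ev
      by (auto simp: successively_append_iff nth_append)
    have "P1 \<noteq> P2"
    proof
      assume eq: "P1 = P2"
      have "R (Q ! 0) (Q ! 1)" using successively_nth[OF Q(7), of 0] Qlen by simp
      moreover have "Q ! 0 = u" using Q by (metis hd_conv_nth)
      ultimately show False using u eq P1 P2 unfolding L_def R_def by auto
    qed
    then have "g + 2 \<le> length P1 + length P2"
      using two_paths[of E g, OF sym gir P1(1) P2(1) P1(2) P2(2) P1(3) P2(3)] P1 P2 eqw by auto
    then show False using P1 P2 Q t3 i j by simp
  qed
  define LL where "LL = {v \<in> L. t < length (p v)}"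
  have finX: "finite X" unfolding X_def by simp
  have finL: "finite L" using finX unfolding L_def by simp
  have cardC: "card (L - LL) \<le> 1"
  proof -
    have "u = v" if "u \<in> L - LL" "v \<in> L - LL" for u v
    proof (rule ccontr)
      assume uv: "u \<noteq> v"
      have uu: "u \<in> L" "length (p u) \<le> t" "2 \<le> length (p u)" "u < n"
        using that Xn unfolding LL_def L_def by auto
      have vv: "v \<in> L" "length (p v) \<le> t" "2 \<le> length (p v)" "v < n"
        using that Xn unfolding LL_def L_def by auto
      have "p u ! (length (p u) - 1) = r" "p v ! (length (p v) - 1) = r"
        using pv[OF uu(4)] pv[OF vv(4)] by (auto simp: last_conv_nth)
      moreover have "Suc 0 \<le> length (p u) - Suc 0" "length (p u) - Suc 0 < length (p u)"
        "Suc 0 \<le> length (p v) - Suc 0" "length (p v) - Suc 0 < length (p v)"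
        "length (p u) - 1 \<le> t" "length (p v) - 1 \<le> t" using uu vv by auto
      ultimately show False using claimB[OF uu(1) vv(1) uv, of "length (p u) - 1" "length (p v) - 1"]
        by simp
    qed
    then show ?thesis using finL by (simp add: card_le_Suc0_iff_eq)
  qed
  define I where "I = {i. Suc i < length q \<and> {q ! i, q ! Suc i} \<in> first_edges n p}"
  define N where "N = {v \<in> X. 2 \<le> length (p v) \<and> {v, p v ! 1} \<in> edges_of q}"
  have finI: "finite I" unfolding I_def by (rule finite_subset[of _ "{..<length q}"]) auto
  have XL: "X - L \<subseteq> insert r N"
  proof
    fix v assume v: "v \<in> X - L"
    show "v \<in> insert r N"
    proof (cases "2 \<le> length (p v)")
      case True then show ?thesis using v unfolding L_def N_def by auto
    next
      case False
      have "v < n" using v Xn by auto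
      then have pvv: "p v \<noteq> []" "hd (p v) = v" "last (p v) = r" using pv by auto
      then have "length (p v) > 0" by simp
      then have "length (p v) = 1" using False by linarith
      then have "length (p v) = 1" "hd (p v) = v" "last (p v) = r" using pvv by auto
      then have "v = r" by (cases "p v") auto
      then show ?thesis by simp
    qed
  qed
  have cardN: "card N \<le> 2 * card I"
  proof -
    define f where "f v = (SOME i. Suc i < length q \<and> {v, p v ! 1} = {q ! i, q ! Suc i})" for v
    have f: "Suc (f v) < length q \<and> {v, p v ! 1} = {q ! f v, q ! Suc (f v)}" if "v \<in> N" for v
    proof -
      have "\<exists>i. Suc i < length q \<and> {v, p v ! 1} = {q ! i, q ! Suc i}"
        using that unfolding N_def edges_of_def by blast
      then show ?thesis unfolding f_def by (rule someI_ex)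
    qed
    have img: "(\<lambda>v. (f v, v)) ` N \<subseteq> Sigma I (\<lambda>i. {q ! i, q ! Suc i})"
    proof
      fix x assume "x \<in> (\<lambda>v. (f v, v)) ` N"
      then obtain v where v: "v \<in> N" "x = (f v, v)" by blast
      have "v < n" using v Xn unfolding N_def by auto
      then have "{v, p v ! 1} \<in> first_edges n p" using v unfolding N_def first_edges_def by blast
      then have "f v \<in> I" using f[OF v(1)] unfolding I_def by auto
      moreover have "v \<in> {q ! f v, q ! Suc (f v)}" using f[OF v(1)] by (metis insertI1)
      ultimately show "x \<in> Sigma I (\<lambda>i. {q ! i, q ! Suc i})" using v by simp
    qed
    have "card N = card ((\<lambda>v. (f v, v)) ` N)" by (simp add: card_image inj_on_def)
    also have "\<dots> \<le> card (Sigma I (\<lambda>i. {q ! i, q ! Suc i}))"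
      by (rule card_mono[OF _ img]) (simp add: finI)
    also have "\<dots> = (\<Sum>i\<in>I. card {q ! i, q ! Suc i})" using finI by simp
    also have "\<dots> \<le> (\<Sum>i\<in>I. 2)"
      by (rule sum_mono) (simp add: card_insert_if)
    finally show ?thesis by simp
  qed
  have finN: "finite N" using finX unfolding N_def by simp
  have cardXL: "card (X - L) \<le> 1 + 2 * card I"
  proof -
    have "card (X - L) \<le> card (insert r N)" by (rule card_mono[OF _ XL]) (simp add: finN)
    also have "\<dots> \<le> Suc (card N)" by (simp add: card_insert_if finN)
    finally show ?thesis using cardN by simp
  qed
  have cardX: "card X \<le> card LL + 2 + 2 * card I"
  proof -
    have s1: "L \<subseteq> X" "LL \<subseteq> L" unfolding L_def LL_def by auto
    have finLL: "finite LL" using finL s1 finite_subset by blast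
    have "card (X - L) = card X - card L" "card L \<le> card X"
      using card_Diff_subset[OF finL s1(1)] card_mono[OF finX s1(1)] by auto
    then have "card X \<le> card L + card (X - L)" by simp
    moreover have "card (L - LL) = card L - card LL" "card LL \<le> card L"
      using card_Diff_subset[OF finLL s1(2)] card_mono[OF finL s1(2)] by auto
    then have "card L \<le> card LL + card (L - LL)" by simp
    ultimately show ?thesis using cardC cardXL by simp
  qed
  have claimE: "card LL * t \<le> union_cost p X"
  proof -
    define h where "h = (\<lambda>(v, k). {p v ! (k - 1), p v ! k})"
    have LLn: "v \<in> L" "v < n" "t < length (p v)" if "v \<in> LL" for v
      using that Xn unfolding LL_def L_def by auto
    have inj: "inj_on h (LL \<times> {1..t})"
    proof (rule inj_onI)
      fix a b assume a: "a \<in> LL \<times> {1..t}" and b: "b \<in> LL \<times> {1..t}" and hab: "h a = h b"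
      obtain u k where a': "a = (u, k)" by (cases a)
      obtain v k' where b': "b = (v, k')" by (cases b)
      have ak: "u \<in> LL" "1 \<le> k" "k \<le> t" using a a' by auto
      have bk: "v \<in> LL" "1 \<le> k'" "k' \<le> t" using b b' by auto
      have eq: "{p u ! (k - 1), p u ! k} = {p v ! (k' - 1), p v ! k'}" using hab a' b' h_def by simp
      show "a = b"
      proof (cases "u = v")
        case True
        have d: "distinct (p u)" using pv LLn(2)[OF ak(1)] by blast
        have lu: "k < length (p u)" "k' < length (p u)" using LLn(3)[OF ak(1)] LLn(3)[OF bk(1)] ak bk True by auto
        from eq True have "(p u ! (k-1) = p u ! (k'-1) \<and> p u ! k = p u ! k') \<or> (p u ! (k-1) = p u ! k' \<and> p u ! k = p u ! (k'-1))"
          by (auto simp: doubleton_eq_iff)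
        then have "k = k'"
        proof
          assume "p u ! (k-1) = p u ! (k'-1) \<and> p u ! k = p u ! k'"
          then show "k = k'" using nth_eq_iff_index_eq[OF d lu] by simp
        next
          assume h2: "p u ! (k-1) = p u ! k' \<and> p u ! k = p u ! (k'-1)"
          then have "k - 1 = k'" "k = k' - 1" using nth_eq_iff_index_eq[OF d] lu by auto
          then show "k = k'" using ak by simp
        qed
        then show ?thesis using True a' b' by simp
      next
        case False
        have lu: "k < length (p u)" "k' < length (p v)" using LLn(3)[OF ak(1)] LLn(3)[OF bk(1)] ak bk by auto
        have "p u ! k = p v ! (k' - 1) \<or> p u ! k = p v ! k'" using eq by (auto simp: doubleton_eq_iff)
        then show ?thesis
        proof
          assume "p u ! k = p v ! k'"
          then show ?thesis using claimB[OF LLn(1)[OF ak(1)] LLn(1)[OF bk(1)] False, of k k'] ak bk lu by simp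
        next
          assume h3: "p u ! k = p v ! (k' - 1)"
          show ?thesis
          proof (cases "k' = 1")
            case True
            then have "p u ! k = v" using h3 hdnth[OF LLn(2)[OF bk(1)]] by simp
            moreover have "v \<in> X" using bk LL_def L_def by simp
            ultimately show ?thesis using claimA[OF LLn(1)[OF ak(1)], of k] ak lu by simp
          next
            case False
            have "1 \<le> k' - 1" "k' - 1 \<le> t" "k' - 1 < length (p v)" using False bk lu by auto
            then show ?thesis using claimB[OF LLn(1)[OF ak(1)] LLn(1)[OF bk(1)] \<open>u \<noteq> v\<close>, of k "k' - 1"]
              ak bk lu h3 by simp
          qed
        qed
      qed
    qed
    have sub: "h ` (LL \<times> {1..t}) \<subseteq> (\<Union>v\<in>X. edges_of (p v))"
    proof
      fix e assume "e \<in> h ` (LL \<times> {1..t})"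
      then obtain v k where vk: "v \<in> LL" "1 \<le> k" "k \<le> t" "e = {p v ! (k - 1), p v ! k}"
        unfolding h_def by auto
      have kk: "Suc (k - 1) < length (p v)" "Suc (k - 1) = k" using vk LLn(3)[OF vk(1)] by auto
      have "e = {p v ! (k - 1), p v ! Suc (k - 1)}" using vk(4) kk(2) by simp
      then have "e \<in> edges_of (p v)" unfolding edges_of_def using kk(1) by blast
      moreover have "v \<in> X" using vk(1) unfolding LL_def L_def by simp
      ultimately show "e \<in> (\<Union>v\<in>X. edges_of (p v))" by blast
    qed
    have finE: "finite (edges_of xs)" for xs :: "nat list"
    proof -
      have "edges_of xs = (\<lambda>i. {xs ! i, xs ! Suc i}) ` {i. Suc i < length xs}"
        unfolding edges_of_def by blast
      moreover have "finite {i. Suc i < length xs}"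
        by (rule finite_subset[of _ "{..<length xs}"]) auto
      ultimately show ?thesis by simp
    qed
    have "card LL * t = card (LL \<times> {1..t})" by (simp add: card_cartesian_product)
    also have "\<dots> = card (h ` (LL \<times> {1..t}))" using inj by (simp add: card_image)
    also have "\<dots> \<le> card (\<Union>v\<in>X. edges_of (p v))"
      by (rule card_mono[OF _ sub]) (simp add: finX finE)
    finally show ?thesis unfolding union_cost_def .
  qed
  have gI: "real (card I) \<le> real t / 8" and gX: "real t / 2 \<le> real (card X)"
    using good unfolding good_walk_def I_def X_def t_def by auto
  have t3r: "real g \<le> 3 * real t + 2" "33 \<le> real t" using t3 by linarith+
  have r1: "real (card X) \<le> real (card LL) + 2 + 2 * real (card I)" using cardX by linarith
  have a: "real (card X) / 4 \<le> real (card LL)" using r1 gI gX t3r by linarith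
  have b: "real g / 4 \<le> real t" using t3r by linarith
  have "real (card X) / 4 * (real g / 4) \<le> real (card LL) * real t"
    by (rule mult_mono[OF a b]) auto
  also have "\<dots> \<le> real (union_cost p X)" using claimE by (metis of_nat_le_iff of_nat_mult)
  finally show ?thesis unfolding X_def by simp
qed

theorem lemma7:
  "\<exists>(C::real) (g\<^sub>0::nat). C > 0 \<and>
    (\<forall>(n::nat) (E::nat \<Rightarrow> nat \<Rightarrow> bool) (d::nat) (\<beta>::real) (g::nat) (r::nat)
       (p::nat \<Rightarrow> nat list) (q::nat list).
       expander n E d \<beta> \<longrightarrow> girth n E g \<longrightarrow> g \<ge> g\<^sub>0 \<longrightarrow> r < n \<longrightarrow>
       (\<forall>v<n. is_path_from_to n E (p v) v r) \<longrightarrow>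
       is_walk n E q \<longrightarrow> length q = g div 3 \<longrightarrow> good_walk n p q \<longrightarrow>
       real (union_cost p (set q)) \<ge> C * real (card (set q)) * real g)"
  apply (rule exI[of _ "1/16"], rule exI[of _ "100"])
  apply (intro conjI allI impI)
   apply simp
  apply (rule lemma7_core)
  apply (auto simp: expander_def)
  done

end
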